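(* Let $(X,\tau)$ be a topological space with $|X|=\kappa$. Then: (i) $X$ is completely Hausdorff if and only if every compact subset of $X$ (of cardinality $\le\kappa$) is zero-closed; (ii) $X$ is Urysohn if and only if every compact subset of $X$ is Urysohn-closed; (iii) $X$ is Hausdorff if and only if every compact subset of $X$ is $\theta$-closed; (iv) $X$ is a kc-space if and only if every compact subset of $X$ is closed; (v) $X$ is weakly Hausdorff if and only if every compact subset of $X$ of cardinality $\le 1$ is $\delta$-closed; (vi) $X$ is $T_1$ if and only if every compact subset of $X$ of cardinality $\le 1$ is closed; (vii) $X$ is $T_0$ if and only if every compact subset of $X$ of cardinality $\le 1$ is $\lambda$-closed.
   Context: A subset $A$ of $X$ is zero-open if for each $x\in A$ there exist a zero-set $Z$ and a cozero-set $C$ of $X$ with $x\in C\subseteq Z\subseteq A$; zero-closed sets are complements of zero-open sets. $X$ is completely Hausdorff if any two distinct points have disjoint cozero-set neighborhoods. A set $A$ is Urysohn-open if for each $x\in A$ there are open $U,V$ with $x\in U\subseteq \mathrm{Cl}(U)\subseteq V\subseteq \mathrm{Cl}(V)\subseteq A$; Urysohn-closed sets are their complements. $X$ is Urysohn if any two distinct points have open neighborhoods with disjoint closures. The $\theta$-closure of $A$ is $\{x\in X:\mathrm{Cl}(U)\cap A\neq\emptyset$ for every open $U\ni x\}$, and $A$ is $\theta$-closed if it equals its $\theta$-closure. A set $U$ is regular open if $U=\mathrm{Int}(\mathrm{Cl}(U))$; $x$ is a $\delta$-cluster point of $A$ if $A\cap U\ne\emptyset$ for every regular open $U\ni x$;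 $A$ is $\delta$-closed if it contains all its $\delta$-cluster points. A $\Lambda$-set is an intersection of open sets; $A$ is $\lambda$-closed if $A=L\cap C$ with $L$ a $\Lambda$-set and $C$ closed. $X$ is a kc-space if every compact subset is closed. $X$ is weakly Hausdorff if every singleton is $\delta$-closed (equivalently its semi-regularization is $T_1$). *)

theory Defs
  imports "HOL-Analysis.Analysis"
begin

definition zero_set :: "'a topology \<Rightarrow> 'a set \<Rightarrow> bool" where
  "zero_set X Z \<longleftrightarrow> (\<exists>f. continuous_map X euclideanreal f \<and> Z = {x \<in> topspace X. f x = 0})"

definition cozero_set :: "'a topology \<Rightarrow> 'a set \<Rightarrow> bool" where
  "cozero_set X C \<longleftrightarrow> (\<exists>f. continuous_map X euclideanreal f \<and> C = {x \<in> topspace X. f x \<noteq> 0})"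

definition zero_open :: "'a topology \<Rightarrow> 'a set \<Rightarrow> bool" where
  "zero_open X A \<longleftrightarrow> A \<subseteq> topspace X \<and>
     (\<forall>x\<in>A. \<exists>Z C. zero_set X Z \<and> cozero_set X C \<and> x \<in> C \<and> C \<subseteq> Z \<and> Z \<subseteq> A)"

definition zero_closed :: "'a topology \<Rightarrow> 'a set \<Rightarrow> bool" where
  "zero_closed X A \<longleftrightarrow> A \<subseteq> topspace X \<and> zero_open X (topspace X - A)"

definition completely_Hausdorff_space :: "'a topology \<Rightarrow> bool" where
  "completely_Hausdorff_space X \<longleftrightarrow>
     (\<forall>x\<in>topspace X. \<forall>y\<in>topspace X. x \<noteq> y \<longrightarrow>
        (\<exists>U V. cozero_set X U \<and> cozero_set X V \<and> x \<in> U \<and> y \<in> V \<and> disjnt U V))"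

definition urysohn_open :: "'a topology \<Rightarrow> 'a set \<Rightarrow> bool" where
  "urysohn_open X A \<longleftrightarrow> A \<subseteq> topspace X \<and>
     (\<forall>x\<in>A. \<exists>U V. openin X U \<and> openin X V \<and> x \<in> U \<and>
        X closure_of U \<subseteq> V \<and> X closure_of V \<subseteq> A)"

definition urysohn_closed :: "'a topology \<Rightarrow> 'a set \<Rightarrow> bool" where
  "urysohn_closed X A \<longleftrightarrow> A \<subseteq> topspace X \<and> urysohn_open X (topspace X - A)"

definition Urysohn_space :: "'a topology \<Rightarrow> bool" where
  "Urysohn_space X \<longleftrightarrow>
     (\<forall>x\<in>topspace X. \<forall>y\<in>topspace X. x \<noteq> y \<longrightarrow>
        (\<exists>U V. openin X U \<and> openin X V \<and> x \<in> U \<and> y \<in> V \<and>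
               disjnt (X closure_of U) (X closure_of V)))"

definition theta_closure :: "'a topology \<Rightarrow> 'a set \<Rightarrow> 'a set" where
  "theta_closure X A = {x \<in> topspace X. \<forall>U. openin X U \<and> x \<in> U \<longrightarrow> X closure_of U \<inter> A \<noteq> {}}"

definition theta_closed :: "'a topology \<Rightarrow> 'a set \<Rightarrow> bool" where
  "theta_closed X A \<longleftrightarrow> theta_closure X A = A"

definition regular_open :: "'a topology \<Rightarrow> 'a set \<Rightarrow> bool" where
  "regular_open X U \<longleftrightarrow> U = X interior_of (X closure_of U)"

definition delta_closed :: "'a topology \<Rightarrow> 'a set \<Rightarrow> bool" where
  "delta_closed X A \<longleftrightarrow> A \<subseteq> topspace X \<and>
     (\<forall>x\<in>topspace X. (\<forall>U. regular_open X U \<and> x \<in> U \<longrightarrow> A \<inter> U \<noteq> {}) \<longrightarrow> x \<in> A)"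

definition Lambda_set :: "'a topology \<Rightarrow> 'a set \<Rightarrow> bool" where
  "Lambda_set X L \<longleftrightarrow> (\<exists>\<U>. (\<forall>U\<in>\<U>. openin X U) \<and> L = topspace X \<inter> \<Inter>\<U>)"

definition lambda_closed :: "'a topology \<Rightarrow> 'a set \<Rightarrow> bool" where
  "lambda_closed X A \<longleftrightarrow> (\<exists>L C. Lambda_set X L \<and> closedin X C \<and> A = L \<inter> C)"

definition weakly_Hausdorff_space :: "'a topology \<Rightarrow> bool" where
  "weakly_Hausdorff_space X \<longleftrightarrow> (\<forall>x\<in>topspace X. delta_closed X {x})"

end

theory Submission
  imports Defs
begin

lemma cozero_sub: "cozero_set X C \<Longrightarrow> C \<subseteq> topspace X"
  unfolding cozero_set_def by auto

lemma cozero_topspace: "cozero_set X (topspace X)"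
  unfolding cozero_set_def by (rule exI[of _ "\<lambda>x. 1"]) auto

lemma cozero_empty: "cozero_set X {}"
  unfolding cozero_set_def by (rule exI[of _ "\<lambda>x. 0"]) auto

lemma cozero_Int: "cozero_set X A \<Longrightarrow> cozero_set X B \<Longrightarrow> cozero_set X (A \<inter> B)"
  unfolding cozero_set_def
proof (elim exE conjE)
  fix f g assume f: "continuous_map X euclideanreal f" and g: "continuous_map X euclideanreal g"
    and A: "A = {x \<in> topspace X. f x \<noteq> 0}" and B: "B = {x \<in> topspace X. g x \<noteq> 0}"
  show "\<exists>h. continuous_map X euclideanreal h \<and> A \<inter> B = {x \<in> topspace X. h x \<noteq> 0}"
    by (rule exI[of _ "\<lambda>x. f x * g x"]) (auto simp: A B intro: continuous_map_real_mult f g)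
qed

lemma cozero_Un: "cozero_set X A \<Longrightarrow> cozero_set X B \<Longrightarrow> cozero_set X (A \<union> B)"
  unfolding cozero_set_def
proof (elim exE conjE)
  fix f g assume f: "continuous_map X euclideanreal f" and g: "continuous_map X euclideanreal g"
    and A: "A = {x \<in> topspace X. f x \<noteq> 0}" and B: "B = {x \<in> topspace X. g x \<noteq> 0}"
  have "\<And>x. (\<bar>f x\<bar> + \<bar>g x\<bar> \<noteq> 0) = (f x \<noteq> 0 \<or> g x \<noteq> 0)" by auto
  then show "\<exists>h. continuous_map X euclideanreal h \<and> A \<union> B = {x \<in> topspace X. h x \<noteq> 0}"
    by (intro exI[of _ "\<lambda>x. \<bar>f x\<bar> + \<bar>g x\<bar>"] conjI)
       (auto simp: A B intro!: continuous_map_add continuous_map_real_abs f g)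
qed

lemma cozero_Inter_fin: "finite F \<Longrightarrow> (\<forall>C\<in>F. cozero_set X C) \<Longrightarrow> cozero_set X (topspace X \<inter> \<Inter>F)"
proof (induction F rule: finite_induct)
  case empty then show ?case by (simp add: cozero_topspace)
next
  case (insert A F)
  have "topspace X \<inter> \<Inter>(insert A F) = A \<inter> (topspace X \<inter> \<Inter>F)" by auto
  then show ?case using insert cozero_Int by auto
qed

lemma cozero_Union_fin: "finite F \<Longrightarrow> (\<forall>C\<in>F. cozero_set X C) \<Longrightarrow> cozero_set X (\<Union>F)"
proof (induction F rule: finite_induct)
  case empty then show ?case by (simp add: cozero_empty)
next
  case (insert A F)
  then show ?case using cozero_Un by auto
qed

lemma zero_compl: "cozero_set X C \<Longrightarrow> zero_set X (topspace X - C)"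
  unfolding cozero_set_def zero_set_def by auto

lemma cozero_compl: "zero_set X Z \<Longrightarrow> cozero_set X (topspace X - Z)"
  unfolding cozero_set_def zero_set_def by auto

lemma cozero_open: "cozero_set X C \<Longrightarrow> openin X C"
  unfolding cozero_set_def
proof (elim exE conjE)
  fix f assume f: "continuous_map X euclideanreal f" and C: "C = {x \<in> topspace X. f x \<noteq> 0}"
  have "openin X {x \<in> topspace X. f x \<in> - {0}}"
    by (rule openin_continuous_map_preimage[OF f]) auto
  then show "openin X C" using C by simp
qed

lemma open_Inter_fin: "finite F \<Longrightarrow> (\<forall>C\<in>F. openin X C) \<Longrightarrow> openin X (topspace X \<inter> \<Inter>F)"
proof (induction F rule: finite_induct)
  case empty then show ?case by simp
next
  case (insert A F)
  have "topspace X \<inter> \<Inter>(insert A F) = A \<inter> (topspace X \<inter> \<Inter>F)"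
    using insert openin_subset by auto
  then show ?case using insert by auto
qed

lemma cover_lemma:
  assumes "compactin X K" "\<And>y. y \<in> K \<Longrightarrow> \<exists>V. openin X V \<and> y \<in> V \<and> Q V"
  shows "\<exists>\<V>. finite \<V> \<and> (\<forall>V\<in>\<V>. openin X V \<and> Q V) \<and> K \<subseteq> \<Union>\<V>"
proof -
  have "K \<subseteq> \<Union>{V. openin X V \<and> Q V}" using assms(2) by blast
  then obtain F where "finite F" "F \<subseteq> {V. openin X V \<and> Q V}" "K \<subseteq> \<Union>F"
    using assms(1) unfolding compactin_def by (metis (no_types, lifting) mem_Collect_eq)
  then show ?thesis by blast
qed


lemma part1_fwd:
  assumes CH: "completely_Hausdorff_space X" and K: "compactin X K"
  shows "zero_closed X K"
proof -
  have Ksub: "K \<subseteq> topspace X" using compactin_subset_topspace K by blast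
  have "zero_open X (topspace X - K)" unfolding zero_open_def
  proof (intro conjI ballI)
    show "topspace X - K \<subseteq> topspace X" by auto
    fix x assume x: "x \<in> topspace X - K"
    have "\<exists>V. openin X V \<and> y \<in> V \<and> (cozero_set X V \<and> (\<exists>U. cozero_set X U \<and> x \<in> U \<and> disjnt U V))"
      if y: "y \<in> K" for y
    proof -
      have "x \<noteq> y" using x y by auto
      with CH x y Ksub obtain U V where "cozero_set X U" "cozero_set X V" "x \<in> U" "y \<in> V" "disjnt U V"
        unfolding completely_Hausdorff_space_def by (metis DiffE subsetD)
      then show ?thesis using cozero_open by blast
    qed
    then obtain \<V> where V: "finite \<V>"
      "\<forall>V\<in>\<V>. openin X V \<and> (cozero_set X V \<and> (\<exists>U. cozero_set X U \<and> x \<in> U \<and> disjnt U V))"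
      "K \<subseteq> \<Union>\<V>"
      using cover_lemma[OF K, of "\<lambda>V. cozero_set X V \<and> (\<exists>U. cozero_set X U \<and> x \<in> U \<and> disjnt U V)"]
      by blast
    then obtain f where f: "\<forall>V\<in>\<V>. cozero_set X (f V) \<and> x \<in> f V \<and> disjnt (f V) V" by metis
    define C where "C = topspace X \<inter> \<Inter>(f ` \<V>)"
    define Z where "Z = topspace X - \<Union>\<V>"
    have "cozero_set X C" unfolding C_def using cozero_Inter_fin[of "f ` \<V>" X] V(1) f by auto
    moreover have "zero_set X Z" unfolding Z_def using zero_compl[OF cozero_Union_fin[of \<V> X]] V by auto
    moreover have "x \<in> C" using x f unfolding C_def by auto
    moreover have "C \<subseteq> Z" using f unfolding C_def Z_def disjnt_iff by blast
    moreover have "Z \<subseteq> topspace X - K" using V(3) unfolding Z_def by auto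
    ultimately show "\<exists>Z C. zero_set X Z \<and> cozero_set X C \<and> x \<in> C \<and> C \<subseteq> Z \<and> Z \<subseteq> topspace X - K"
      by blast
  qed
  then show ?thesis using Ksub unfolding zero_closed_def by blast
qed

lemma part1_bwd:
  assumes H: "\<forall>K. compactin X K \<and> K \<lesssim> topspace X \<longrightarrow> zero_closed X K"
  shows "completely_Hausdorff_space X"
  unfolding completely_Hausdorff_space_def
proof (intro ballI impI)
  fix x y assume x: "x \<in> topspace X" and y: "y \<in> topspace X" and xy: "x \<noteq> y"
  have "compactin X {y}" using y by simp
  moreover have "{y} \<lesssim> topspace X" using y by (simp add: subset_imp_lepoll)
  ultimately have "zero_open X (topspace X - {y})" using H unfolding zero_closed_def by blast
  then obtain Z C where ZC: "zero_set X Z" "cozero_set X C" "x \<in> C" "C \<subseteq> Z" "Z \<subseteq> topspace X - {y}"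
    using x xy unfolding zero_open_def by blast
  have "cozero_set X (topspace X - Z)" using cozero_compl ZC by blast
  moreover have "y \<in> topspace X - Z" using y ZC by auto
  moreover have "disjnt C (topspace X - Z)" using ZC by (auto simp: disjnt_iff)
  ultimately show "\<exists>U V. cozero_set X U \<and> cozero_set X V \<and> x \<in> U \<and> y \<in> V \<and> disjnt U V"
    using ZC by blast
qed


lemma part2_fwd:
  assumes U: "Urysohn_space X" and K: "compactin X K"
  shows "urysohn_closed X K"
proof -
  have Ksub: "K \<subseteq> topspace X" using compactin_subset_topspace K by blast
  have "urysohn_open X (topspace X - K)" unfolding urysohn_open_def
  proof (intro conjI ballI)
    show "topspace X - K \<subseteq> topspace X" by auto
    fix x assume x: "x \<in> topspace X - K"
    have "\<exists>V. openin X V \<and> y \<in> V \<and> (\<exists>U. openin X U \<and> x \<in> U \<and> disjnt (X closure_of U) (X closure_of V))"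
      if y: "y \<in> K" for y
    proof -
      have "x \<noteq> y" using x y by auto
      with U x y Ksub obtain U V where "openin X U" "openin X V" "x \<in> U" "y \<in> V"
        "disjnt (X closure_of U) (X closure_of V)"
        unfolding Urysohn_space_def by (metis DiffE subsetD)
      then show ?thesis by blast
    qed
    then obtain \<V> where V: "finite \<V>"
      "\<forall>V\<in>\<V>. openin X V \<and> (\<exists>U. openin X U \<and> x \<in> U \<and> disjnt (X closure_of U) (X closure_of V))"
      "K \<subseteq> \<Union>\<V>"
      using cover_lemma[OF K, of "\<lambda>V. \<exists>U. openin X U \<and> x \<in> U \<and> disjnt (X closure_of U) (X closure_of V)"]
      by blast
    then obtain f where f: "\<forall>V\<in>\<V>. openin X (f V) \<and> x \<in> f V \<and> disjnt (X closure_of (f V)) (X closure_of V)"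
      by metis
    define U0 where "U0 = topspace X \<inter> \<Inter>(f ` \<V>)"
    define W where "W = \<Union>\<V>"
    define V0 where "V0 = topspace X - X closure_of W"
    have oU0: "openin X U0" unfolding U0_def using open_Inter_fin[of "f ` \<V>" X] V(1) f by auto
    have oW: "openin X W" unfolding W_def using V by auto
    have oV0: "openin X V0" unfolding V0_def by auto
    have xU0: "x \<in> U0" using x f unfolding U0_def by auto
    have clW: "X closure_of W = (\<Union>S\<in>\<V>. X closure_of S)" unfolding W_def using closure_of_Union V(1) by blast
    have "X closure_of U0 \<inter> X closure_of W = {}"
    proof -
      have "X closure_of U0 \<inter> X closure_of S = {}" if S: "S \<in> \<V>" for S
      proof -
        have "U0 \<subseteq> f S" using S unfolding U0_def by auto
        then have "X closure_of U0 \<subseteq> X closure_of (f S)" by (rule closure_of_mono)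
        then show ?thesis using f S by (auto simp: disjnt_iff)
      qed
      then show ?thesis using clW by auto
    qed
    moreover have "X closure_of U0 \<subseteq> topspace X" by (rule closure_of_subset_topspace)
    ultimately have c1: "X closure_of U0 \<subseteq> V0" unfolding V0_def by auto
    have "W \<subseteq> topspace X" using oW by (rule openin_subset)
    then have "W \<subseteq> X closure_of W" by (rule closure_of_subset)
    then have "W \<inter> V0 = {}" unfolding V0_def by auto
    then have "W \<inter> X closure_of V0 = {}" using openin_Int_closure_of_eq_empty[OF oW] by blast
    moreover have "X closure_of V0 \<subseteq> topspace X" by (rule closure_of_subset_topspace)
    ultimately have c2: "X closure_of V0 \<subseteq> topspace X - K" using V(3) unfolding W_def by auto
    show "\<exists>U V. openin X U \<and> openin X V \<and> x \<in> U \<and> X closure_of U \<subseteq> V \<and> X closure_of V \<subseteq> topspace X - K"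
      using oU0 oV0 xU0 c1 c2 by blast
  qed
  then show ?thesis using Ksub unfolding urysohn_closed_def by blast
qed

lemma part2_bwd:
  assumes H: "\<forall>K. compactin X K \<longrightarrow> urysohn_closed X K"
  shows "Urysohn_space X"
  unfolding Urysohn_space_def
proof (intro ballI impI)
  fix x y assume x: "x \<in> topspace X" and y: "y \<in> topspace X" and xy: "x \<noteq> y"
  have "compactin X {y}" using y by simp
  then have "urysohn_open X (topspace X - {y})" using H unfolding urysohn_closed_def by blast
  then obtain U V where UV: "openin X U" "openin X V" "x \<in> U" "X closure_of U \<subseteq> V"
    "X closure_of V \<subseteq> topspace X - {y}"
    using x xy unfolding urysohn_open_def by blast
  define V' where "V' = topspace X - X closure_of V"
  have oV': "openin X V'" unfolding V'_def by auto
  have yV': "y \<in> V'" using y UV unfolding V'_def by auto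
  have "V \<subseteq> topspace X" using UV(2) by (rule openin_subset)
  then have "V \<subseteq> X closure_of V" by (rule closure_of_subset)
  then have "V \<inter> V' = {}" unfolding V'_def by auto
  then have "V \<inter> X closure_of V' = {}" using openin_Int_closure_of_eq_empty[OF UV(2)] by blast
  then have "disjnt (X closure_of U) (X closure_of V')" using UV(4) by (auto simp: disjnt_iff)
  then show "\<exists>U V. openin X U \<and> openin X V \<and> x \<in> U \<and> y \<in> V \<and> disjnt (X closure_of U) (X closure_of V)"
    using UV oV' yV' by blast
qed

lemma part3_fwd:
  assumes H: "Hausdorff_space X" and K: "compactin X K"
  shows "theta_closed X K"
proof -
  have Ksub: "K \<subseteq> topspace X" using compactin_subset_topspace K by blast
  have sub1: "K \<subseteq> theta_closure X K"
  proof
    fix x assume xK: "x \<in> K"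
    have "X closure_of U \<inter> K \<noteq> {}" if "openin X U" "x \<in> U" for U
    proof -
      have "U \<subseteq> topspace X" using that(1) by (rule openin_subset)
      then have "U \<subseteq> X closure_of U" by (rule closure_of_subset)
      then show ?thesis using that xK by auto
    qed
    then show "x \<in> theta_closure X K" using xK Ksub unfolding theta_closure_def by blast
  qed
  have sub2: "theta_closure X K \<subseteq> K"
  proof (rule ccontr)
    assume "\<not> theta_closure X K \<subseteq> K"
    then obtain x where xT: "x \<in> theta_closure X K" and xK: "x \<notin> K" by blast
    have xt: "x \<in> topspace X" using xT unfolding theta_closure_def by auto
    have "\<exists>V. openin X V \<and> y \<in> V \<and> (\<exists>U. openin X U \<and> x \<in> U \<and> disjnt U V)"
      if y: "y \<in> K" for y
    proof -
      have "x \<noteq> y" using xK y by auto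
      with H xt y Ksub obtain U V where "openin X U" "openin X V" "x \<in> U" "y \<in> V" "disjnt U V"
        unfolding Hausdorff_space_def by (metis subsetD)
      then show ?thesis by blast
    qed
    then obtain \<V> where V: "finite \<V>"
      "\<forall>V\<in>\<V>. openin X V \<and> (\<exists>U. openin X U \<and> x \<in> U \<and> disjnt U V)"
      "K \<subseteq> \<Union>\<V>"
      using cover_lemma[OF K, of "\<lambda>V. \<exists>U. openin X U \<and> x \<in> U \<and> disjnt U V"]
      by blast
    then obtain f where f: "\<forall>V\<in>\<V>. openin X (f V) \<and> x \<in> f V \<and> disjnt (f V) V"
      by metis
    define U0 where "U0 = topspace X \<inter> \<Inter>(f ` \<V>)"
    define W where "W = \<Union>\<V>"
    have oU0: "openin X U0" unfolding U0_def using open_Inter_fin[of "f ` \<V>" X] V(1) f by auto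
    have oW: "openin X W" unfolding W_def using V by auto
    have xU0: "x \<in> U0" using xt f unfolding U0_def by auto
    have "W \<inter> U0 = {}" unfolding W_def U0_def using f by (auto simp: disjnt_iff)
    then have "W \<inter> X closure_of U0 = {}" using openin_Int_closure_of_eq_empty[OF oW] by blast
    then have "X closure_of U0 \<inter> K = {}" using V(3) unfolding W_def by blast
    then show False using xT oU0 xU0 unfolding theta_closure_def by blast
  qed
  show ?thesis using sub1 sub2 unfolding theta_closed_def by blast
qed

lemma part3_bwd:
  assumes H: "\<forall>K. compactin X K \<longrightarrow> theta_closed X K"
  shows "Hausdorff_space X"
  unfolding Hausdorff_space_def
proof (intro allI impI)
  fix x y assume "x \<in> topspace X \<and> y \<in> topspace X \<and> x \<noteq> y"
  then have x: "x \<in> topspace X" and y: "y \<in> topspace X" and xy: "x \<noteq> y" by auto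
  have "compactin X {y}" using y by simp
  then have "theta_closure X {y} = {y}" using H unfolding theta_closed_def by blast
  then have "x \<notin> theta_closure X {y}" using xy by blast
  then obtain U where U: "openin X U" "x \<in> U" "X closure_of U \<inter> {y} = {}"
    using x unfolding theta_closure_def by blast
  define V where "V = topspace X - X closure_of U"
  have "openin X V" unfolding V_def by auto
  moreover have "y \<in> V" using y U unfolding V_def by auto
  moreover have "disjnt U V"
  proof -
    have "U \<subseteq> topspace X" using U(1) by (rule openin_subset)
    then have "U \<subseteq> X closure_of U" by (rule closure_of_subset)
    then show ?thesis unfolding V_def by (auto simp: disjnt_iff)
  qed
  ultimately show "\<exists>U V. openin X U \<and> openin X V \<and> x \<in> U \<and> y \<in> V \<and> disjnt U V"
    using U by blast
qed


lemma card_le1_cases: "finite K \<Longrightarrow> card K \<le> 1 \<Longrightarrow> K = {} \<or> (\<exists>x. K = {x})"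
  by (metis One_nat_def card_1_singleton_iff card_eq_0_iff le_Suc_eq le_zero_eq)

lemma small_iff: "(finite K \<and> card K \<le> 1) \<longleftrightarrow> (K = {} \<or> (\<exists>x. K = {x}))"
  using card_le1_cases by auto

lemma delta_closed_empty: "delta_closed X {}"
proof -
  have "regular_open X (topspace X)" unfolding regular_open_def by simp
  then show ?thesis unfolding delta_closed_def by blast
qed

lemma part5: "weakly_Hausdorff_space X \<longleftrightarrow>
            (\<forall>K. compactin X K \<and> finite K \<and> card K \<le> 1 \<longrightarrow> delta_closed X K)"
  unfolding weakly_Hausdorff_space_def small_iff
  using delta_closed_empty by (auto simp: compactin_sing)

lemma part6: "t1_space X \<longleftrightarrow>
            (\<forall>K. compactin X K \<and> finite K \<and> card K \<le> 1 \<longrightarrow> closedin X K)"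
  unfolding t1_space_closedin_singleton small_iff
  by (auto simp: compactin_sing)

lemma lambda_closed_empty: "lambda_closed X {}"
proof -
  have "Lambda_set X (topspace X)" unfolding Lambda_set_def by (rule exI[of _ "{}"]) simp
  then show ?thesis unfolding lambda_closed_def by blast
qed

lemma t0_lambda:
  assumes T: "t0_space X" and x: "x \<in> topspace X"
  shows "lambda_closed X {x}"
proof -
  define L where "L = topspace X \<inter> \<Inter>{U. openin X U \<and> x \<in> U}"
  define C where "C = X closure_of {x}"
  have LL: "Lambda_set X L" unfolding L_def Lambda_set_def by (rule exI[of _ "{U. openin X U \<and> x \<in> U}"]) auto
  have CC: "closedin X C" unfolding C_def by simp
  have "{x} = L \<inter> C"
  proof
    have "x \<in> C" unfolding C_def using x closure_of_subset[of "{x}" X] by auto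
    then show "{x} \<subseteq> L \<inter> C" using x unfolding L_def by auto
  next
    show "L \<inter> C \<subseteq> {x}"
    proof
      fix y assume y: "y \<in> L \<inter> C"
      have yt: "y \<in> topspace X" using y unfolding L_def by auto
      show "y \<in> {x}"
      proof (rule ccontr)
        assume "y \<notin> {x}"
        then have "x \<noteq> y" by auto
        then obtain U where U: "openin X U" "x \<notin> U \<longleftrightarrow> y \<in> U"
          using T x yt unfolding t0_space_def by blast
        show False
        proof (cases "x \<in> U")
          case True
          then have "y \<in> U" using y U unfolding L_def by auto
          then show False using True U by auto
        next
          case False
          then have "y \<in> U" using U by auto
          moreover have "y \<in> X closure_of {x}" using y unfolding C_def by auto
          ultimately have "\<exists>z\<in>{x}. z \<in> U" using U(1) unfolding in_closure_of by blast
          then show False using False by auto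
        qed
      qed
    qed
  qed
  then show ?thesis unfolding lambda_closed_def using LL CC by blast
qed

lemma lambda_t0:
  assumes H: "\<forall>x\<in>topspace X. lambda_closed X {x}"
  shows "t0_space X"
  unfolding t0_space_def
proof (intro ballI impI)
  fix x y assume x: "x \<in> topspace X" and y: "y \<in> topspace X" and xy: "x \<noteq> y"
  show "\<exists>U. openin X U \<and> (x \<notin> U \<longleftrightarrow> y \<in> U)"
  proof (rule ccontr)
    assume "\<not> ?thesis"
    then have same: "\<And>U. openin X U \<Longrightarrow> (x \<in> U \<longleftrightarrow> y \<in> U)" by blast
    obtain L C where LC: "Lambda_set X L" "closedin X C" "{x} = L \<inter> C"
      using H x unfolding lambda_closed_def by blast
    obtain \<U> where U: "\<forall>U\<in>\<U>. openin X U" "L = topspace X \<inter> \<Inter>\<U>"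
      using LC(1) unfolding Lambda_set_def by blast
    have "x \<in> L" "x \<in> C" using LC(3) by auto
    then have "y \<in> L" using U y same by auto
    moreover have "y \<in> C"
    proof (rule ccontr)
      assume "y \<notin> C"
      have "openin X (topspace X - C)" using LC(2) by auto
      then have "x \<in> topspace X - C" using same[of "topspace X - C"] y \<open>y \<notin> C\<close> by auto
      then show False using \<open>x \<in> C\<close> by auto
    qed
    ultimately have "y \<in> {x}" using LC(3) by auto
    then show False using xy by auto
  qed
qed

lemma part7: "t0_space X \<longleftrightarrow>
            (\<forall>K. compactin X K \<and> finite K \<and> card K \<le> 1 \<longrightarrow> lambda_closed X K)"
  unfolding small_iff
proof
  assume "t0_space X" then show "\<forall>K. compactin X K \<and> (K = {} \<or> (\<exists>x. K = {x})) \<longrightarrow> lambda_closed X K"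
    using lambda_closed_empty t0_lambda by auto
next
  assume "\<forall>K. compactin X K \<and> (K = {} \<or> (\<exists>x. K = {x})) \<longrightarrow> lambda_closed X K"
  then have "\<forall>x\<in>topspace X. lambda_closed X {x}" by auto
  then show "t0_space X" by (rule lambda_t0)
qed

theorem mainTheorem1:
  fixes X :: "'a topology"
  shows "(completely_Hausdorff_space X \<longleftrightarrow>
            (\<forall>K. compactin X K \<and> K \<lesssim> topspace X \<longrightarrow> zero_closed X K))
       \<and> (Urysohn_space X \<longleftrightarrow> (\<forall>K. compactin X K \<longrightarrow> urysohn_closed X K))
       \<and> (Hausdorff_space X \<longleftrightarrow> (\<forall>K. compactin X K \<longrightarrow> theta_closed X K))
       \<and> (kc_space X \<longleftrightarrow> (\<forall>K. compactin X K \<longrightarrow> closedin X K))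
       \<and> (weakly_Hausdorff_space X \<longleftrightarrow>
            (\<forall>K. compactin X K \<and> finite K \<and> card K \<le> 1 \<longrightarrow> delta_closed X K))
       \<and> (t1_space X \<longleftrightarrow>
            (\<forall>K. compactin X K \<and> finite K \<and> card K \<le> 1 \<longrightarrow> closedin X K))
       \<and> (t0_space X \<longleftrightarrow>
            (\<forall>K. compactin X K \<and> finite K \<and> card K \<le> 1 \<longrightarrow> lambda_closed X K))"
proof (intro conjI)
  show "completely_Hausdorff_space X \<longleftrightarrow>
            (\<forall>K. compactin X K \<and> K \<lesssim> topspace X \<longrightarrow> zero_closed X K)"
    using part1_fwd part1_bwd by blast
  show "Urysohn_space X \<longleftrightarrow> (\<forall>K. compactin X K \<longrightarrow> urysohn_closed X K)"
    using part2_fwd part2_bwd by blast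
  show "Hausdorff_space X \<longleftrightarrow> (\<forall>K. compactin X K \<longrightarrow> theta_closed X K)"
    using part3_fwd part3_bwd by blast
  show "kc_space X \<longleftrightarrow> (\<forall>K. compactin X K \<longrightarrow> closedin X K)"
    unfolding kc_space_def by (rule refl)
qed (rule part5, rule part6, rule part7)

end
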